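(* Let $T=(T_1,\dots,T_m)$ be algebraically independent over $F$, let $g\in F[T]$ be irreducible, and put $F[g]=\mathrm{Frac}(F[T]/(g))$. Let $\phi$ be a quasilinear $p$-form over $F$ and $f\in F[T]$ with $f\in D(\phi_{F(T)})$. If $\phi_{F[g]}$ is anisotropic, then $\mathrm{mult}_g(f)\equiv0\pmod p$.
   Context: Let $p$ be a prime and $F$ a field of characteristic $p$. A quasilinear $p$-form over a field $K$ of char. $p$ is a map $\phi\colon V\to K$ on a nonzero finite-dimensional $K$-vector space, homogeneous of degree $p$ and additive; $D(\phi)$ is its value set; $\phi_K$ the scalar extension; anisotropic means $\phi(v)\ne0$ for all $v\ne0$. $\mathrm{mult}_g(f)$ is the largest $s\ge0$ with $f=g^sh$ for some $h\in F[T]$ (with $\mathrm{mult}_g(0)=+\infty$). *)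

theory Defs
  imports Main "HOL-Library.Poly_Mapping" "HOL-Library.Extended_Nat"
    "HOL-Computational_Algebra.Fraction_Field" "HOL-Computational_Algebra.Factorial_Ring"
begin

text \<open>Polynomial ring F[T] in the finitely many algebraically independent variables
  T_v, v ranging over a finite (linearly ordered) type 'v; m = CARD('v).\<close>
type_synonym ('v, 'a) mpoly = "('v \<Rightarrow>\<^sub>0 nat) \<Rightarrow>\<^sub>0 'a"

definition mconst :: "'a::zero \<Rightarrow> ('v, 'a) mpoly" where
  "mconst c = Poly_Mapping.single 0 c"

definition quasilinear_form :: "nat \<Rightarrow> (('i::finite \<Rightarrow> 'a::field) \<Rightarrow> 'a) \<Rightarrow> bool" where
  "quasilinear_form p \<phi> \<longleftrightarrow>
     (\<forall>x y. \<phi> (\<lambda>i. x i + y i) = \<phi> x + \<phi> y) \<and> (\<forall>c x. \<phi> (\<lambda>i. c * x i) = c ^ p * \<phi> x)"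

text \<open>Scalar extension phi_K along a field embedding / algebra map e : F -> K,
  computed on the standard basis of F^n (extended K-linearly to K^n).\<close>
definition form_ext :: "nat \<Rightarrow> ('a \<Rightarrow> 'k::field) \<Rightarrow> (('i::finite \<Rightarrow> 'a::field) \<Rightarrow> 'a)
     \<Rightarrow> ('i \<Rightarrow> 'k) \<Rightarrow> 'k" where
  "form_ext p e \<phi> x = (\<Sum>i\<in>UNIV. e (\<phi> (\<lambda>j. if j = i then 1 else 0)) * x i ^ p)"

definition value_set :: "(('i \<Rightarrow> 'k) \<Rightarrow> 'k) \<Rightarrow> 'k set" where
  "value_set \<psi> = range \<psi>"

definition anisotropic :: "(('i \<Rightarrow> 'k::zero) \<Rightarrow> 'k) \<Rightarrow> bool" where
  "anisotropic \<psi> \<longleftrightarrow> (\<forall>x. (\<exists>i. x i \<noteq> 0) \<longrightarrow> \<psi> x \<noteq> 0)"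

text \<open>pi : F[T] -> K exhibits K as Frac(F[T]/(g)): pi is a ring homomorphism with
  kernel (g) and every element of K is a quotient of elements of the image.\<close>
definition is_frac_quotient :: "('r::comm_ring_1 \<Rightarrow> 'k::field) \<Rightarrow> 'r \<Rightarrow> bool" where
  "is_frac_quotient \<pi> g \<longleftrightarrow>
     \<pi> 1 = 1 \<and> (\<forall>a b. \<pi> (a + b) = \<pi> a + \<pi> b) \<and> (\<forall>a b. \<pi> (a * b) = \<pi> a * \<pi> b) \<and>
     (\<forall>h. \<pi> h = 0 \<longleftrightarrow> g dvd h) \<and>
     (\<forall>z. \<exists>a b. \<pi> b \<noteq> 0 \<and> z = \<pi> a / \<pi> b)"

definition mult :: "'r::comm_semiring_1 \<Rightarrow> 'r \<Rightarrow> enat" where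
  "mult g f = (if f = 0 then \<infinity> else enat (GREATEST s. g ^ s dvd f))"

end

theory Submission
  imports Defs
begin

definition lm :: "('v::linorder, 'a::zero) mpoly \<Rightarrow> ('v \<Rightarrow>\<^sub>0 nat)" where
  "lm a = Max (Poly_Mapping.keys a)"

lemma zero_le_pm: "(0::'v::linorder \<Rightarrow>\<^sub>0 nat) \<le> x"
proof (cases "x = 0")
  case False
  then obtain v where v: "Poly_Mapping.lookup x v \<noteq> 0" by (metis poly_mapping_eqI lookup_zero)
  let ?S = "{v. Poly_Mapping.lookup x v \<noteq> 0}"
  have fin: "finite ?S" by simp
  define k where "k = Min ?S"
  have k: "k \<in> ?S" unfolding k_def using fin v by (intro Min_in) auto
  have "\<forall>k'<k. Poly_Mapping.lookup x k' = 0" using fin unfolding k_def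
    by (metis (mono_tags, lifting) Min_le leD mem_Collect_eq)
  hence "less_fun (Poly_Mapping.lookup 0) (Poly_Mapping.lookup x)" using k unfolding less_fun_def by auto
  thus ?thesis by (simp add: less_eq_poly_mapping.rep_eq)
qed simp

lemma lm_in: "a \<noteq> 0 \<Longrightarrow> lm a \<in> Poly_Mapping.keys a"
  unfolding lm_def by (intro Max_in) auto

lemma lm_ge: "k \<in> Poly_Mapping.keys a \<Longrightarrow> k \<le> lm a"
  unfolding lm_def by simp

lemma lm_mult:
  fixes a b :: "('v::linorder, 'a::idom) mpoly"
  assumes "a \<noteq> 0" "b \<noteq> 0"
  shows "lm (a * b) = lm a + lm b"
proof -
  let ?A = "lm a" and ?B = "lm b"
  define a' where "a' = a - Poly_Mapping.single ?A (Poly_Mapping.lookup a ?A)"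
  define b' where "b' = b - Poly_Mapping.single ?B (Poly_Mapping.lookup b ?B)"
  have ka': "\<forall>k\<in>Poly_Mapping.keys a'. k < ?A"
  proof
    fix k assume "k \<in> Poly_Mapping.keys a'"
    hence "Poly_Mapping.lookup a' k \<noteq> 0" by (simp add: in_keys_iff)
    hence "k \<noteq> ?A \<and> k \<in> Poly_Mapping.keys a"
      unfolding a'_def by (auto simp: lookup_minus lookup_single in_keys_iff when_def split: if_splits)
    thus "k < ?A" using lm_ge[of k a] by auto
  qed
  have kb': "\<forall>k\<in>Poly_Mapping.keys b'. k < ?B"
  proof
    fix k assume "k \<in> Poly_Mapping.keys b'"
    hence "Poly_Mapping.lookup b' k \<noteq> 0" by (simp add: in_keys_iff)
    hence "k \<noteq> ?B \<and> k \<in> Poly_Mapping.keys b"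
      unfolding b'_def by (auto simp: lookup_minus lookup_single in_keys_iff when_def split: if_splits)
    thus "k < ?B" using lm_ge[of k b] by auto
  qed
  have ab: "a * b = Poly_Mapping.single (?A + ?B) (Poly_Mapping.lookup a ?A * Poly_Mapping.lookup b ?B)
     + (Poly_Mapping.single ?A (Poly_Mapping.lookup a ?A) * b' + a' * b)"
    unfolding a'_def b'_def by (simp add: algebra_simps mult_single)
  have z1: "Poly_Mapping.lookup (Poly_Mapping.single ?A (Poly_Mapping.lookup a ?A) * b') (?A + ?B) = 0"
  proof -
    have "?A + ?B \<notin> Poly_Mapping.keys (Poly_Mapping.single ?A (Poly_Mapping.lookup a ?A) * b')"
    proof
      assume "?A + ?B \<in> Poly_Mapping.keys (Poly_Mapping.single ?A (Poly_Mapping.lookup a ?A) * b')"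
      then obtain x y where "?A + ?B = x + y" "x \<in> Poly_Mapping.keys (Poly_Mapping.single ?A (Poly_Mapping.lookup a ?A))"
        "y \<in> Poly_Mapping.keys b'" using keys_mult by blast
      moreover hence "x = ?A" by (auto split: if_splits)
      ultimately show False using kb' by auto
    qed
    thus ?thesis by (simp add: in_keys_iff)
  qed
  have z2: "Poly_Mapping.lookup (a' * b) (?A + ?B) = 0"
  proof -
    have "?A + ?B \<notin> Poly_Mapping.keys (a' * b)"
    proof
      assume "?A + ?B \<in> Poly_Mapping.keys (a' * b)"
      then obtain x y where "?A + ?B = x + y" "x \<in> Poly_Mapping.keys a'"
        "y \<in> Poly_Mapping.keys b" using keys_mult by blast
      moreover have "x < ?A" using ka' calculation by auto
      moreover have "y \<le> ?B" using lm_ge calculation by auto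
      ultimately have "x + y < ?A + ?B" using add_less_le_mono by blast
      thus False using \<open>?A + ?B = x + y\<close> by simp
    qed
    thus ?thesis by (simp add: in_keys_iff)
  qed
  have "Poly_Mapping.lookup (a * b) (?A + ?B) = Poly_Mapping.lookup a ?A * Poly_Mapping.lookup b ?B"
    unfolding ab by (simp add: lookup_add z1 z2)
  moreover have "Poly_Mapping.lookup a ?A \<noteq> 0" "Poly_Mapping.lookup b ?B \<noteq> 0" using lm_in assms by (auto simp: in_keys_iff)
  ultimately have inn: "?A + ?B \<in> Poly_Mapping.keys (a * b)" by (simp add: in_keys_iff)
  have "\<forall>k\<in>Poly_Mapping.keys (a*b). k \<le> ?A + ?B"
  proof
    fix k assume "k \<in> Poly_Mapping.keys (a*b)"
    then obtain x y where "k = x + y" "x \<in> Poly_Mapping.keys a" "y \<in> Poly_Mapping.keys b"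
      using keys_mult by blast
    thus "k \<le> ?A + ?B" using lm_ge add_mono by blast
  qed
  thus ?thesis using inn unfolding lm_def
    by (intro Max_eqI) auto
qed

definition sz :: "('v::finite \<Rightarrow>\<^sub>0 nat) \<Rightarrow> nat" where
  "sz x = (\<Sum>v\<in>UNIV. Poly_Mapping.lookup x v)"

lemma sz_add: "sz (x + y) = sz x + sz y"
  unfolding sz_def by (simp add: lookup_add sum.distrib)

lemma sz_pos: "x \<noteq> 0 \<Longrightarrow> sz x \<ge> 1"
proof -
  assume "x \<noteq> 0"
  then obtain v where v: "Poly_Mapping.lookup x v \<noteq> 0" by (metis poly_mapping_eqI lookup_zero)
  have "Poly_Mapping.lookup x v \<le> sz x" unfolding sz_def
    by (rule member_le_sum) auto
  thus ?thesis using v by simp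
qed

lemma lm_power:
  fixes g :: "('v::{finite,linorder}, 'a::idom) mpoly"
  assumes "g \<noteq> 0"
  shows "sz (lm (g ^ s)) = s * sz (lm g)"
proof (induction s)
  case 0
  have "lm (1::('v, 'a) mpoly) = 0" unfolding lm_def by simp
  then show ?case by (simp add: sz_def)
next
  case (Suc s)
  have ne: "g ^ s \<noteq> 0" using assms by simp
  have "lm (g ^ Suc s) = lm g + lm (g ^ s)"
    unfolding power_Suc by (rule lm_mult[OF assms ne])
  hence "sz (lm (g ^ Suc s)) = sz (lm g) + sz (lm (g ^ s))" by (simp only: sz_add)
  then show ?case using Suc.IH by simp
qed

lemma dvd_bound:
  fixes g a :: "('v::{finite,linorder}, 'a::idom) mpoly"
  assumes "a \<noteq> 0" "g \<noteq> 0" "lm g \<noteq> 0" "g ^ s dvd a"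
  shows "s \<le> sz (lm a)"
proof -
  obtain h where h: "a = g ^ s * h" using assms(4) by blast
  have "h \<noteq> 0" using h assms(1) by auto
  have "g ^ s \<noteq> 0" using assms(2) by simp
  hence "lm a = lm (g ^ s) + lm h" using h \<open>h \<noteq> 0\<close> lm_mult by blast
  hence "sz (lm a) = s * sz (lm g) + sz (lm h)"
    by (simp only: sz_add lm_power[OF assms(2)])
  moreover have "sz (lm g) \<ge> 1" using sz_pos assms(3) by blast
  moreover have "s \<le> s * sz (lm g)" using calculation(2) by simp
  ultimately show ?thesis by linarith
qed

lemma lm_zero_const:
  fixes g :: "('v::linorder, 'a::zero) mpoly"
  assumes "g \<noteq> 0" "lm g = 0"
  shows "g = mconst (Poly_Mapping.lookup g 0)"
proof (rule poly_mapping_eqI)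
  fix k
  show "Poly_Mapping.lookup g k = Poly_Mapping.lookup (mconst (Poly_Mapping.lookup g 0)) k"
  proof (cases "k \<in> Poly_Mapping.keys g")
    case True
    hence "k \<le> 0" using lm_ge assms(2) by metis
    hence "k = 0" using zero_le_pm[of k] by simp
    thus ?thesis by (simp add: mconst_def)
  next
    case False
    thus ?thesis by (auto simp: mconst_def lookup_single when_def in_keys_iff)
  qed
qed

lemma irred_lm:
  fixes g :: "('v::{finite,linorder}, 'a::field) mpoly"
  assumes "irreducible g"
  shows "g \<noteq> 0" "lm g \<noteq> 0"
proof -
  show g0: "g \<noteq> 0" using assms by auto
  show "lm g \<noteq> 0"
  proof
    assume "lm g = 0"
    hence eq: "g = mconst (Poly_Mapping.lookup g 0)" using lm_zero_const g0 by blast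
    have c: "Poly_Mapping.lookup g 0 \<noteq> 0" using g0 eq by (metis mconst_def single_zero)
    have "g * mconst (inverse (Poly_Mapping.lookup g 0)) = 1"
      by (subst eq) (simp add: mconst_def mult_single c)
    hence "g dvd 1" by (metis dvd_triv_left)
    thus False using assms by (simp add: irreducible_def)
  qed
qed

lemma fin_dvd:
  fixes g a :: "('v::{finite,linorder}, 'a::field) mpoly"
  assumes "irreducible g" "a \<noteq> 0"
  shows "finite {s. g ^ s dvd a}"
proof (rule finite_subset)
  show "{s. g ^ s dvd a} \<subseteq> {..sz (lm a)}"
  proof
    fix s assume "s \<in> {s. g ^ s dvd a}"
    hence "g ^ s dvd a" by simp
    hence "s \<le> sz (lm a)" using dvd_bound[OF assms(2) irred_lm(1)[OF assms(1)] irred_lm(2)[OF assms(1)]] by blast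
    thus "s \<in> {..sz (lm a)}" by simp
  qed
qed simp

lemma decomp:
  fixes g a :: "'r::idom"
  assumes "finite {s. g ^ s dvd a}"
  shows "\<exists>e a'. a = g ^ e * a' \<and> \<not> g dvd a' \<and> (\<forall>s. g ^ s dvd a \<longleftrightarrow> s \<le> e)"
proof -
  define e where "e = Max {s. g ^ s dvd a}"
  have ne: "0 \<in> {s. g ^ s dvd a}" by simp
  have "e \<in> {s. g ^ s dvd a}" unfolding e_def using assms ne by (intro Max_in) blast+
  hence e_in: "g ^ e dvd a" by simp
  have e_max: "\<And>s. g ^ s dvd a \<Longrightarrow> s \<le> e" unfolding e_def using assms by simp
  obtain a' where a': "a = g ^ e * a'" using e_in by blast
  have nd: "\<not> g dvd a'"
  proof
    assume "g dvd a'"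
    hence "g ^ Suc e dvd a" using a' by (simp add: mult.commute mult_dvd_mono)
    thus False using e_max by fastforce
  qed
  have "\<forall>s. g ^ s dvd a \<longleftrightarrow> s \<le> e"
  proof (intro allI iffI)
    fix s assume "s \<le> e"
    hence "g ^ s dvd g ^ e" by (rule le_imp_power_dvd)
    thus "g ^ s dvd a" using e_in by (rule dvd_trans)
  qed (rule e_max)
  thus ?thesis using a' nd by blast
qed

lemma uniq:
  fixes g u w :: "'r::idom"
  assumes "g ^ a * u = g ^ b * w" "\<not> g dvd u" "\<not> g dvd w" "g \<noteq> 0"
  shows "a = b"
proof (rule ccontr)
  assume "a \<noteq> b"
  have key: "\<And>a b u w. g ^ a * u = g ^ b * w \<Longrightarrow> \<not> g dvd u \<Longrightarrow> a < b \<Longrightarrow> False"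
  proof -
    fix a b u w assume h: "g ^ a * u = g ^ b * w" "\<not> g dvd u" "a < b"
    have "g ^ b = g ^ a * g ^ (b - a)" using h(3) by (simp add: power_add[symmetric])
    hence "g ^ a * u = g ^ a * (g ^ (b - a) * w)" using h(1) by (simp add: mult.assoc)
    hence "u = g ^ (b - a) * w" using assms(4) by simp
    moreover have "g dvd g ^ (b - a)" using h(3) by (simp add: dvd_power)
    ultimately show False using h(2) by simp
  qed
  show False
  proof (cases "a < b")
    case True thus False using key assms by blast
  next
    case False hence "b < a" using \<open>a \<noteq> b\<close> by simp
    thus False using key[of b w a u] assms by simp
  qed
qed


lemma Fract1_add: "Fract (a::'r::idom) 1 + Fract b 1 = Fract (a + b) 1"
  by simp

lemma Fract1_sum: "finite A \<Longrightarrow> Fract (\<Sum>i\<in>A. h i) 1 = (\<Sum>i\<in>A. Fract (h i :: 'r::idom) 1)"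
  by (induction A rule: finite_induct) (simp_all add: Zero_fract_def Fract1_add[symmetric])

lemma Fract_pow: "Fract ((a::'r::idom) ^ n) (b ^ n) = Fract a b ^ n"
proof (induction n)
  case 0 thus ?case by (simp add: One_fract_def)
next
  case (Suc n)
  have "Fract a b ^ Suc n = Fract a b * Fract (a ^ n) (b ^ n)" using Suc by simp
  also have "\<dots> = Fract (a ^ Suc n) (b ^ Suc n)" by (simp only: mult_fract power_Suc)
  finally show ?case by simp
qed

lemma Fract_sum_den:
  assumes "(b::'r::idom) \<noteq> 0"
  shows "(\<Sum>i\<in>A. Fract (h i) b) = Fract (\<Sum>i\<in>A. h i) b"
proof (cases "finite A")
  case True thus ?thesis
  proof (induction A rule: finite_induct)
    case empty thus ?case by (simp add: Zero_fract_def eq_fract)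
  next
    case (insert a A)
    have "Fract (h a) b + Fract (sum h A) b = Fract (b * (h a + sum h A)) (b * b)"
      using assms by (simp add: algebra_simps)
    also have "\<dots> = Fract (h a + sum h A) b" by (rule mult_fract_cancel[OF assms])
    finally show ?case using insert by simp
  qed
qed (simp add: Zero_fract_def eq_fract)

lemma Fract1_inj: "Fract (a::'r::idom) 1 = Fract b 1 \<Longrightarrow> a = b"
  by (simp add: eq_fract)

lemma common_denom:
  fixes x :: "'i::finite \<Rightarrow> 'r::idom fract"
  shows "\<exists>D y. D \<noteq> 0 \<and> (\<forall>i. x i = Fract (y i) D)"
proof -
  have "finite A \<Longrightarrow> \<exists>D y. D \<noteq> 0 \<and> (\<forall>i\<in>A. x i = Fract (y i) D)" for A :: "'i set"
  proof (induction A rule: finite_induct)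
    case empty
    show ?case by (rule exI[of _ 1]) auto
  next
    case (insert a A)
    then obtain D y where D: "D \<noteq> 0" "\<forall>i\<in>A. x i = Fract (y i) D" by blast
    obtain n d where nd: "x a = Fract n d" "d \<noteq> 0" by (cases "x a") blast
    define y' where "y' = (\<lambda>i. if i = a then D * n else d * y i)"
    have "\<forall>i\<in>insert a A. x i = Fract (y' i) (D * d)"
    proof
      fix i assume "i \<in> insert a A"
      show "x i = Fract (y' i) (D * d)"
      proof (cases "i = a")
        case True
        thus ?thesis using nd D by (simp add: y'_def mult_fract_cancel)
      next
        case False
        hence "i \<in> A" using \<open>i \<in> insert a A\<close> by simp
        thus ?thesis using False D nd
          by (simp add: y'_def mult.commute[of D d] mult_fract_cancel)
      qed
    qed
    moreover have "D * d \<noteq> 0" using D nd by simp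
    ultimately show ?case by blast
  qed
  from this[of UNIV] show ?thesis by simp
qed

lemma hom_facts:
  fixes \<pi> :: "'r::comm_ring_1 \<Rightarrow> 'k::field"
  assumes "is_frac_quotient \<pi> g"
  shows "\<pi> 0 = 0" "\<And>A h. \<pi> (\<Sum>i\<in>A. h i) = (\<Sum>i\<in>A. \<pi> (h i))"
    "\<And>a n. \<pi> (a ^ n) = \<pi> a ^ n" "\<And>a b. \<pi> (a * b) = \<pi> a * \<pi> b"
    "\<And>h. \<pi> h = 0 \<longleftrightarrow> g dvd h"
proof -
  have add: "\<And>a b. \<pi> (a + b) = \<pi> a + \<pi> b" and mul: "\<And>a b. \<pi> (a * b) = \<pi> a * \<pi> b"
    and one: "\<pi> 1 = 1" and ker: "\<And>h. \<pi> h = 0 \<longleftrightarrow> g dvd h"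
    using assms unfolding is_frac_quotient_def by blast+
  have "\<pi> 0 + \<pi> 0 = \<pi> 0 + 0" using add[of 0 0] by simp
  then show z: "\<pi> 0 = 0" by (rule add_left_imp_eq)
  show "\<pi> (\<Sum>i\<in>A. h i) = (\<Sum>i\<in>A. \<pi> (h i))" for A h
  proof (cases "finite A")
    case True thus ?thesis by (induction A rule: finite_induct) (simp_all add: z add)
  qed (simp add: z)
  show "\<pi> (a ^ n) = \<pi> a ^ n" for a n by (induction n) (simp_all add: one mul)
  show "\<pi> (a * b) = \<pi> a * \<pi> b" for a b by (rule mul)
  show "\<pi> h = 0 \<longleftrightarrow> g dvd h" for h by (rule ker)
qed

lemma prime_like:
  fixes \<pi> :: "'r::comm_ring_1 \<Rightarrow> 'k::field"
  assumes "is_frac_quotient \<pi> g" "g dvd a * b"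
  shows "g dvd a \<or> g dvd b"
  using hom_facts[OF assms(1)] assms(2) by (metis mult_eq_0_iff)

lemma prime_like_pow:
  fixes \<pi> :: "'r::comm_ring_1 \<Rightarrow> 'k::field"
  assumes "is_frac_quotient \<pi> g" "g dvd a ^ n"
  shows "g dvd a"
  using hom_facts[OF assms(1)] assms(2) by (metis power_eq_0_iff)

theorem mainTheorem14:
  fixes p :: nat
    and \<phi> :: "('i::finite \<Rightarrow> 'a::field) \<Rightarrow> 'a"
    and g f :: "('v::{finite,linorder}, 'a) mpoly"
    and \<pi> :: "('v, 'a) mpoly \<Rightarrow> 'k::field"
  assumes "prime p" and "CHAR('a) = p"
    and "quasilinear_form p \<phi>"
    and "irreducible g"
    and "is_frac_quotient \<pi> g"
    and "Fract f 1 \<in> value_set (form_ext p (\<lambda>c. Fract (mconst c) 1) \<phi>)"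
    and "anisotropic (form_ext p (\<lambda>c. \<pi> (mconst c)) \<phi>)"
  shows "mult g f = \<infinity> \<or> (\<exists>k. mult g f = enat (p * k))"
proof (cases "f = 0")
  case True thus ?thesis by (simp add: mult_def)
next
  case f0: False
  note H = hom_facts[OF assms(5)]
  have g0: "g \<noteq> 0" using assms(4) by auto
  define c where "c = (\<lambda>i. \<phi> (\<lambda>j. if j = i then 1 else 0))"
  obtain x where x: "Fract f 1 = (\<Sum>i\<in>UNIV. Fract (mconst (c i)) 1 * x i ^ p)"
    using assms(6) unfolding value_set_def form_ext_def c_def by auto
  obtain D y where Dy: "D \<noteq> 0" "\<forall>i. x i = Fract (y i) D" using common_denom[of x] by blast
  define S where "S = (\<Sum>i\<in>UNIV. mconst (c i) * y i ^ p)"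
  have Dp: "D ^ p \<noteq> 0" using Dy by simp
  have "Fract f 1 = (\<Sum>i\<in>UNIV. Fract (mconst (c i) * y i ^ p) (D ^ p))"
    unfolding x using Dy by (simp add: Fract_pow[symmetric])
  also have "\<dots> = Fract S (D ^ p)"
    unfolding S_def by (rule Fract_sum_den[OF Dp])
  finally have fS: "f * D ^ p = S" using Dp by (simp add: eq_fract)
  have "\<exists>j. y j \<noteq> 0"
  proof (rule ccontr)
    assume "\<not> ?thesis"
    moreover have "p \<noteq> 0" using assms(1) by auto
    ultimately have "S = 0" unfolding S_def by (simp add: zero_power)
    thus False using fS f0 Dy by simp
  qed
  then obtain j where j: "y j \<noteq> 0" by blast
  define T where "T = {s. \<forall>i. g ^ s dvd y i}"
  have finT: "finite T" using fin_dvd[OF assms(4) j] unfolding T_def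
    by (rule finite_subset[rotated]) blast
  have "0 \<in> T" unfolding T_def by simp
  define s0 where "s0 = Max T"
  have s0T: "s0 \<in> T" unfolding s0_def using finT \<open>0 \<in> T\<close> by (intro Max_in) blast+
  have s0max: "\<And>s. s \<in> T \<Longrightarrow> s \<le> s0" unfolding s0_def using finT by simp
  have "\<forall>i. \<exists>z. y i = g ^ s0 * z" using s0T unfolding T_def by (auto simp: dvd_def)
  then obtain z where z: "\<And>i. y i = g ^ s0 * z i" by metis
  have "\<exists>i. \<not> g dvd z i"
  proof (rule ccontr)
    assume "\<not> ?thesis"
    hence "\<forall>i. g ^ Suc s0 dvd y i" unfolding z by (simp add: mult.commute mult_dvd_mono)
    hence "Suc s0 \<in> T" unfolding T_def by simp
    thus False using s0max by fastforce
  qed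
  then obtain i0 where i0: "\<not> g dvd z i0" by blast
  define W where "W = (\<Sum>i\<in>UNIV. mconst (c i) * z i ^ p)"
  have "\<pi> W = form_ext p (\<lambda>c. \<pi> (mconst c)) \<phi> (\<lambda>i. \<pi> (z i))"
    unfolding W_def form_ext_def c_def H(2) H(3) H(4) by simp
  moreover have "\<pi> (z i0) \<noteq> 0" using i0 H(5) by simp
  ultimately have "\<pi> W \<noteq> 0" using assms(7) unfolding anisotropic_def by metis
  hence W: "\<not> g dvd W" using H(5) by simp
  have SW: "S = g ^ (s0 * p) * W"
  proof -
    have "S = (\<Sum>i\<in>UNIV. (g ^ s0) ^ p * (mconst (c i) * z i ^ p))"
      unfolding S_def z by (simp add: power_mult_distrib algebra_simps)
    also have "\<dots> = (g ^ s0) ^ p * W" unfolding W_def by (simp add: sum_distrib_left)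
    finally show ?thesis by (simp add: power_mult)
  qed
  obtain e f' where ef: "f = g ^ e * f'" "\<not> g dvd f'" "\<forall>s. g ^ s dvd f \<longleftrightarrow> s \<le> e"
    using decomp[OF fin_dvd[OF assms(4) f0]] by blast
  obtain t D' where tD: "D = g ^ t * D'" "\<not> g dvd D'"
    using decomp[OF fin_dvd[OF assms(4) Dy(1)]] by blast
  have nd: "\<not> g dvd f' * D' ^ p"
    using prime_like[OF assms(5)] prime_like_pow[OF assms(5)] ef(2) tD(2) by blast
  have gtp: "g ^ (t * p) = (g ^ t) ^ p" by (rule power_mult)
  have "g ^ (e + t * p) * (f' * D' ^ p) = (g ^ e * f') * (g ^ t * D') ^ p"
    unfolding power_add gtp power_mult_distrib by (simp only: ac_simps)
  also have "\<dots> = f * D ^ p" by (simp only: ef(1) tD(1))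
  also have "\<dots> = g ^ (s0 * p) * W" using fS SW by simp
  finally have "g ^ (e + t * p) * (f' * D' ^ p) = g ^ (s0 * p) * W" .
  hence "e + t * p = s0 * p" using uniq nd W g0 by blast
  hence e: "e = p * (s0 - t)" by (simp add: diff_mult_distrib2 mult.commute)
  have "(GREATEST s. g ^ s dvd f) = e"
    using ef(3) by (intro Greatest_equality) auto
  thus ?thesis using f0 e by (simp add: mult_def)
qed

end
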